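(* Assume the standing conventions of the context. (i) If $m'=m+1$, $Z'$ is regular and $D_Z=\{Z'\}$, then $Z$ is regular. (ii) If $m'=m$, $Z$ is regular and $D_{Z'}=\{Z\}$, then $Z'$ is regular.
   Context: A symbol is an array $\Lambda=\binom{a'_1,\ldots,a'_{m_1}}{b'_1,\ldots,b'_{m_2}}$ of two strictly decreasing finite sequences of nonnegative integers (top row, bottom row); its defect is $\mathrm{def}(\Lambda)=m_1-m_2$. Standing assumptions: $Z=\binom{a_1,\ldots,a_{m+1}}{b_1,\ldots,b_m}$ is a special symbol of defect $1$, i.e. $a_1\ge b_1\ge a_2\ge b_2\ge\cdots\ge b_m\ge a_{m+1}$; $Z'=\binom{c_1,\ldots,c_{m'}}{d_1,\ldots,d_{m'}}$ is a special symbol of defect $0$, i.e. $c_1\ge d_1\ge c_2\ge d_2\ge\cdots\ge c_{m'}\ge d_{m'}$; and $m'\in\{m,m+1\}$. For a symbol $Y$, $Y_{\mathrm I}$ is the set of entries of $Y$ occurring in exactly one row; $Y$ is regular if no entry occurs in both rows. For $M\subset Z_{\mathrm I}$, $\Lambda_M$ is the symbol obtained from $Z$ by moving every entry of $M$ to the other row (rows re-sorted decreasingly); for $N\subset Z'_{\mathrm I}$, $\Lambda_N$ is obtained from $Z'$ in the same way. $\overline{\mathcal S}_Z=\{\Lambda_M: M\subset Z_{\mathrm I}\}$, $\overline{\mathcal S}_{Z'}=\{\Lambda_N:N\subset Z'_{\mathrm I}\}$; $\mathcal S_{Z,1}$ (resp. $\mathcal S_{Z',0}$) is the set of elements of $\overline{\mathcal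 S}_Z$ of defect $1$ (resp. of $\overline{\mathcal S}_{Z'}$ of defect $0$). Relation $\overline{\mathcal B}^+_{Z,Z'}\subset\overline{\mathcal S}_Z\times\overline{\mathcal S}_{Z'}$: for $\Lambda=\binom{a'_1,\ldots,a'_{m_1}}{b'_1,\ldots,b'_{m_2}}\in\overline{\mathcal S}_Z$ and $\Lambda'=\binom{c'_1,\ldots,c'_{m'_1}}{d'_1,\ldots,d'_{m'_2}}\in\overline{\mathcal S}_{Z'}$, $(\Lambda,\Lambda')\in\overline{\mathcal B}^+_{Z,Z'}$ iff $\mathrm{def}(\Lambda')=1-\mathrm{def}(\Lambda)$ and: if $m'=m$, $a'_i>d'_i\ge a'_{i+1}$ for $1\le i\le m'_2$ and $b'_{i-1}>c'_i\ge b'_i$ for $1\le i\le m'_1$; if $m'=m+1$, $a'_i\ge d'_i>a'_{i+1}$ for $1\le i\le m'_2$ and $b'_{i-1}\ge c'_i>b'_i$ for $1\le i\le m'_1$; here $b'_0=+\infty$ and nonexistent entries $a'_j,b'_j$ beyond the row lengths are $-\infty$. Then $\mathcal D_{Z,Z'}=\overline{\mathcal B}^+_{Z,Z'}\cap(\mathcal S_{Z,1}\times\mathcal S_{Z',0})$, $D_Z=\{\Lambda'\mid (Z,\Lambda')\in\mathcal D_{Z,Z'}\}$ and $D_{Z'}=\{\Lambda\mid(\Lambda,Z')\in\mathcal D_{Z,Z'}\}$. *)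

theory Defs
  imports Main "HOL-Library.Extended_Real"
begin

text \<open>A symbol is a pair (top row, bottom row) of lists of naturals, both
  strictly decreasing.\<close>
type_synonym symbol = "nat list \<times> nat list"

definition is_symbol :: "symbol \<Rightarrow> bool" where
  "is_symbol L \<longleftrightarrow> sorted_wrt (>) (fst L) \<and> sorted_wrt (>) (snd L)"

definition defect :: "symbol \<Rightarrow> int" where
  "defect L = int (length (fst L)) - int (length (snd L))"

definition special1 :: "symbol \<Rightarrow> nat \<Rightarrow> bool" where
  "special1 Z m \<longleftrightarrow> is_symbol Z \<and> length (fst Z) = m + 1 \<and> length (snd Z) = m \<and>
     (\<forall>i<m. snd Z ! i \<le> fst Z ! i \<and> fst Z ! (i+1) \<le> snd Z ! i)"

definition special0 :: "symbol \<Rightarrow> nat \<Rightarrow> bool" where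
  "special0 Z m' \<longleftrightarrow> is_symbol Z \<and> length (fst Z) = m' \<and> length (snd Z) = m' \<and>
     (\<forall>i<m'. snd Z ! i \<le> fst Z ! i) \<and> (\<forall>i. i + 1 < m' \<longrightarrow> fst Z ! (i+1) \<le> snd Z ! i)"

definition singles :: "symbol \<Rightarrow> nat set" where
  "singles L = (set (fst L) - set (snd L)) \<union> (set (snd L) - set (fst L))"

definition regular :: "symbol \<Rightarrow> bool" where
  "regular L \<longleftrightarrow> set (fst L) \<inter> set (snd L) = {}"

definition desc_list :: "nat set \<Rightarrow> nat list" where
  "desc_list S = rev (sorted_list_of_set S)"

definition move :: "symbol \<Rightarrow> nat set \<Rightarrow> symbol" where
  "move L M = (desc_list ((set (fst L) - M) \<union> (set (snd L) \<inter> M)),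
               desc_list ((set (snd L) - M) \<union> (set (fst L) \<inter> M)))"

definition Sbar :: "symbol \<Rightarrow> symbol set" where
  "Sbar L = {move L M | M. M \<subseteq> singles L}"

definition Sdef :: "symbol \<Rightarrow> int \<Rightarrow> symbol set" where
  "Sdef L d = {\<Lambda> \<in> Sbar L. defect \<Lambda> = d}"

text \<open>1-based entry of a row; nonexistent entries are -infinity.\<close>
definition ent :: "nat list \<Rightarrow> nat \<Rightarrow> ereal" where
  "ent xs i = (if 1 \<le> i \<and> i \<le> length xs then ereal (real (xs ! (i - 1))) else -\<infinity>)"

definition ent0 :: "nat list \<Rightarrow> nat \<Rightarrow> ereal" where
  "ent0 xs i = (if i = 0 then \<infinity> else ent xs i)"

definition Bplus :: "nat \<Rightarrow> nat \<Rightarrow> symbol \<Rightarrow> symbol \<Rightarrow> symbol \<Rightarrow> symbol \<Rightarrow> bool" where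
  "Bplus m m' Z Z' \<Lambda> \<Lambda>' \<longleftrightarrow>
     \<Lambda> \<in> Sbar Z \<and> \<Lambda>' \<in> Sbar Z' \<and> defect \<Lambda>' = 1 - defect \<Lambda> \<and>
     (let a = fst \<Lambda>; b = snd \<Lambda>; c = fst \<Lambda>'; d = snd \<Lambda>' in
      if m' = m then
        (\<forall>i. 1 \<le> i \<and> i \<le> length d \<longrightarrow> ent a i > ent d i \<and> ent d i \<ge> ent a (i+1)) \<and>
        (\<forall>i. 1 \<le> i \<and> i \<le> length c \<longrightarrow> ent0 b (i-1) > ent c i \<and> ent c i \<ge> ent b i)
      else if m' = m + 1 then
        (\<forall>i. 1 \<le> i \<and> i \<le> length d \<longrightarrow> ent a i \<ge> ent d i \<and> ent d i > ent a (i+1)) \<and>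
        (\<forall>i. 1 \<le> i \<and> i \<le> length c \<longrightarrow> ent0 b (i-1) \<ge> ent c i \<and> ent c i > ent b i)
      else False)"

definition Drel :: "nat \<Rightarrow> nat \<Rightarrow> symbol \<Rightarrow> symbol \<Rightarrow> (symbol \<times> symbol) set" where
  "Drel m m' Z Z' = {(\<Lambda>, \<Lambda>'). Bplus m m' Z Z' \<Lambda> \<Lambda>' \<and> \<Lambda> \<in> Sdef Z 1 \<and> \<Lambda>' \<in> Sdef Z' 0}"

definition D_Z :: "nat \<Rightarrow> nat \<Rightarrow> symbol \<Rightarrow> symbol \<Rightarrow> symbol set" where
  "D_Z m m' Z Z' = {\<Lambda>'. (Z, \<Lambda>') \<in> Drel m m' Z Z'}"

definition D_Z' :: "nat \<Rightarrow> nat \<Rightarrow> symbol \<Rightarrow> symbol \<Rightarrow> symbol set" where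
  "D_Z' m m' Z Z' = {\<Lambda>. (\<Lambda>, Z') \<in> Drel m m' Z Z'}"

end

theory Submission
  imports Defs
begin


definition il :: "symbol \<Rightarrow> nat \<Rightarrow> nat" where
  "il L k = (if even k then fst L ! (k div 2) else snd L ! (k div 2))"

lemma il_even[simp]: "il L (2*p) = fst L ! p" by (simp add: il_def)
lemma il_odd[simp]: "il L (Suc (2*p)) = snd L ! p" by (simp add: il_def)

definition shp :: "symbol \<Rightarrow> nat \<Rightarrow> bool" where
  "shp L N \<longleftrightarrow> length (fst L) = (N+1) div 2 \<and> length (snd L) = N div 2"

lemma set_fst: "shp L N \<Longrightarrow> set (fst L) = il L ` {i. i<N \<and> even i}"
proof safe
  fix x assume s: "shp L N" "x \<in> set (fst L)"
  then obtain p where "p < length (fst L)" "x = fst L ! p" by (auto simp: in_set_conv_nth)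
  then show "x \<in> il L ` {i. i<N \<and> even i}" using s(1)
    by (intro image_eqI[of _ _ "2*p"]) (auto simp: shp_def)
next
  fix i assume "shp L N" "i < N" "even i"
  then show "il L i \<in> set (fst L)" by (auto simp: shp_def il_def)
qed

lemma set_snd: "shp L N \<Longrightarrow> set (snd L) = il L ` {i. i<N \<and> odd i}"
proof safe
  fix x assume s: "shp L N" "x \<in> set (snd L)"
  then obtain p where "p < length (snd L)" "x = snd L ! p" by (auto simp: in_set_conv_nth)
  then show "x \<in> il L ` {i. i<N \<and> odd i}" using s(1)
    by (intro image_eqI[of _ _ "Suc (2*p)"]) (auto simp: shp_def)
next
  fix i assume "shp L N" "i < N" "odd i"
  then show "il L i \<in> set (snd L)" by (auto simp: shp_def il_def elim!: oddE)
qed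

definition mk :: "(nat \<Rightarrow> nat) \<Rightarrow> nat \<Rightarrow> symbol" where
  "mk f N = (map (\<lambda>i. f (2*i)) [0..<(N+1) div 2], map (\<lambda>i. f (Suc (2*i))) [0..<N div 2])"

lemma shp_mk: "shp (mk f N) N" by (simp add: shp_def mk_def)

lemma il_mk: "i < N \<Longrightarrow> il (mk f N) i = f i"
  by (cases "even i") (auto simp: il_def mk_def elim!: evenE oddE)

lemma mk_il: "shp L N \<Longrightarrow> mk (il L) N = L"
  by (cases L) (auto simp: shp_def mk_def intro!: nth_equalityI)

lemma il_eq: "shp L N \<Longrightarrow> shp L' N \<Longrightarrow> (\<forall>i<N. il L i = il L' i) \<Longrightarrow> L = L'"
proof -
  assume a: "shp L N" "shp L' N" "\<forall>i<N. il L i = il L' i"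
  have "mk (il L) N = mk (il L') N"
  proof -
    have "\<And>x. x < (N+1) div 2 \<Longrightarrow> il L (2*x) = il L' (2*x)"
    proof -
      fix x assume "x < (N+1) div 2"
      then have "2*x < N" by presburger
      then show "il L (2*x) = il L' (2*x)" using a(3) by blast
    qed
    moreover have "\<And>x. x < N div 2 \<Longrightarrow> il L (Suc (2*x)) = il L' (Suc (2*x))"
    proof -
      fix x assume "x < N div 2"
      then have "Suc (2*x) < N" by presburger
      then show "il L (Suc (2*x)) = il L' (Suc (2*x))" using a(3) by blast
    qed
    ultimately show ?thesis by (auto simp: mk_def simp del: il_even il_odd)
  qed
  then show ?thesis using mk_il[OF a(1)] mk_il[OF a(2)] by simp
qed

lemma desc_list_set: "sorted_wrt (>) xs \<Longrightarrow> desc_list (set xs) = xs"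
proof -
  assume "sorted_wrt (>) xs"
  then have "sorted_wrt (<) (rev xs)" by (simp add: sorted_wrt_rev)
  then have "sorted (rev xs) \<and> distinct (rev xs)"
    using strict_sorted_iff by blast
  then have "sorted_list_of_set (set (rev xs)) = rev xs"
    by (simp only: sorted_list_of_set_sort_remdups distinct_remdups_id sorted_sort_id)
  then show ?thesis by (simp add: desc_list_def)
qed

definition tr :: "nat \<Rightarrow> nat \<Rightarrow> nat" where
  "tr k i = (if i = k then Suc k else if i = Suc k then k else i)"

lemma tr_mono2: "x + 2 \<le> y \<Longrightarrow> tr k x < tr k y" by (auto simp: tr_def)
lemma tr_lt: "Suc k < N \<Longrightarrow> i < N \<Longrightarrow> tr k i < N" by (auto simp: tr_def)
lemma tr_tr[simp]: "tr k (tr k i) = i" by (auto simp: tr_def)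
lemma tr_even: "even (tr k j) \<longleftrightarrow> (even j \<and> j \<noteq> k \<and> j \<noteq> Suc k) \<or> (odd j \<and> (j = k \<or> j = Suc k))"
  by (auto simp: tr_def)


definition strict :: "(nat \<Rightarrow> nat) \<Rightarrow> nat \<Rightarrow> bool" where
  "strict f N \<longleftrightarrow> (\<forall>i j. i < j \<and> j < N \<longrightarrow> f j < f i)"

lemma swap_lemma:
  assumes shp: "shp L N" and st: "strict (il L) N" and k: "Suc k < N"
  shows "mk (il L \<circ> tr k) N = move L {il L k, il L (Suc k)}"
proof -
  define f where "f = il L"
  define L1 where "L1 = mk (f \<circ> tr k) N"
  define M where "M = {f k, f (Suc k)}"
  have inj: "\<And>i j. i < N \<Longrightarrow> j < N \<Longrightarrow> f i = f j \<longleftrightarrow> i = j"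
    using st unfolding strict_def f_def by (metis less_irrefl nat_neq_iff)
  have shp1: "shp L1 N" by (simp add: L1_def shp_mk)
  have il1: "\<And>i. i < N \<Longrightarrow> il L1 i = f (tr k i)" by (simp add: L1_def il_mk)
  have sa: "set (fst L) = f ` {i. i<N \<and> even i}" using set_fst[OF shp] f_def by simp
  have sb: "set (snd L) = f ` {i. i<N \<and> odd i}" using set_snd[OF shp] f_def by simp
  have sa1: "set (fst L1) = (\<lambda>i. f (tr k i)) ` {i. i<N \<and> even i}"
    using set_fst[OF shp1] il1 by (auto simp: image_iff)
  have sb1: "set (snd L1) = (\<lambda>i. f (tr k i)) ` {i. i<N \<and> odd i}"
    using set_snd[OF shp1] il1 by (auto simp: image_iff)
  have trN: "\<And>i. i < N \<Longrightarrow> tr k i < N" using tr_lt[OF k] .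
  have kN: "k < N" using k by simp
  have e1: "set (fst L1) = set (fst L) - M \<union> (set (snd L) \<inter> M)"
  proof (rule set_eqI)
    fix x
    show "x \<in> set (fst L1) \<longleftrightarrow> x \<in> set (fst L) - M \<union> (set (snd L) \<inter> M)"
    proof (cases "x \<in> f ` {..<N}")
      case True
      then obtain j where j: "j < N" "x = f j" by auto
      have l: "x \<in> set (fst L1) \<longleftrightarrow> even (tr k j)"
        unfolding sa1 using j inj trN by (auto simp: image_iff) (metis tr_tr)
      have r: "x \<in> set (fst L) - M \<union> (set (snd L) \<inter> M) \<longleftrightarrow>
          (even j \<and> j \<noteq> k \<and> j \<noteq> Suc k) \<or> (odd j \<and> (j = k \<or> j = Suc k))"
        unfolding sa sb M_def using j inj kN k by (auto simp: image_iff)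
      show ?thesis using l r tr_even by simp
    next
      case False
      then show ?thesis unfolding sa sb sa1 M_def using trN kN k by auto
    qed
  qed
  have e2: "set (snd L1) = set (snd L) - M \<union> (set (fst L) \<inter> M)"
  proof (rule set_eqI)
    fix x
    show "x \<in> set (snd L1) \<longleftrightarrow> x \<in> set (snd L) - M \<union> (set (fst L) \<inter> M)"
    proof (cases "x \<in> f ` {..<N}")
      case True
      then obtain j where j: "j < N" "x = f j" by auto
      have l: "x \<in> set (snd L1) \<longleftrightarrow> odd (tr k j)"
        unfolding sb1 using j inj trN by (auto simp: image_iff) (metis tr_tr)
      have r: "x \<in> set (snd L) - M \<union> (set (fst L) \<inter> M) \<longleftrightarrow>
          (odd j \<and> j \<noteq> k \<and> j \<noteq> Suc k) \<or> (even j \<and> (j = k \<or> j = Suc k))"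
        unfolding sa sb M_def using j inj kN k by (auto simp: image_iff)
      show ?thesis using l r tr_even[of k j] by auto
    next
      case False
      then show ?thesis unfolding sb sa sb1 M_def using trN kN k by auto
    qed
  qed
  have so1: "sorted_wrt (>) (fst L1)"
  proof (unfold sorted_wrt_iff_nth_less, intro allI impI)
    fix i j assume ij: "i < j" "j < length (fst L1)"
    then have "2*j < N" using shp1 by (simp add: shp_def)
    moreover have "tr k (2*i) < tr k (2*j)" using ij by (intro tr_mono2) simp
    moreover have "2*i < N" using calculation(1) ij by simp
    ultimately show "fst L1 ! j < fst L1 ! i" using il1[of "2*i"] il1[of "2*j"] st trN
      unfolding strict_def f_def by (simp del: il_even add: il_even[symmetric])
  qed
  have so2: "sorted_wrt (>) (snd L1)"
  proof (unfold sorted_wrt_iff_nth_less, intro allI impI)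
    fix i j assume ij: "i < j" "j < length (snd L1)"
    then have "Suc (2*j) < N" using shp1 by (simp add: shp_def)
    moreover have "tr k (Suc (2*i)) < tr k (Suc (2*j))" using ij by (intro tr_mono2) simp
    moreover have "Suc (2*i) < N" using calculation(1) ij by simp
    ultimately show "snd L1 ! j < snd L1 ! i" using il1[of "Suc (2*i)"] il1[of "Suc (2*j)"] st trN
      unfolding strict_def f_def by (simp del: il_odd add: il_odd[symmetric])
  qed
  have "move L M = L1"
    unfolding move_def e1[symmetric] e2[symmetric] using desc_list_set[OF so1] desc_list_set[OF so2]
    by simp
  then show ?thesis unfolding L1_def M_def f_def by simp
qed


definition compat :: "(nat \<Rightarrow> nat) \<Rightarrow> (nat \<Rightarrow> nat) \<Rightarrow> nat \<Rightarrow> bool" where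
  "compat e z N \<longleftrightarrow> (\<forall>k<N. (k+2 < N \<longrightarrow> z (k+1) < e k) \<and> (1 \<le> k \<longrightarrow> e k \<le> z (k-1)))"

lemma find_k:
  fixes e z :: "nat \<Rightarrow> nat"
  assumes "Suc j < N" "e j \<le> z j"
  shows "\<exists>k\<ge>j. Suc k < N \<and> e k \<le> z k \<and> (k+2 = N \<or> z (Suc k) < e (Suc k))"
  using assms
proof (induction "N - j" arbitrary: j rule: less_induct)
  case less
  show ?case
  proof (cases "j+2 = N \<or> z (Suc j) < e (Suc j)")
    case True then show ?thesis using less.prems by auto
  next
    case False
    then have "Suc (Suc j) < N" "e (Suc j) \<le> z (Suc j)" using less.prems by (auto simp: not_less)
    moreover have "N - Suc j < N - j" using less.prems by simp
    ultimately obtain k where "k \<ge> Suc j" "Suc k < N" "e k \<le> z k"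
      "k+2 = N \<or> z (Suc k) < e (Suc k)" using less.hyps[of "Suc j"] by auto
    then show ?thesis by (intro exI[of _ k]) auto
  qed
qed

lemma compat_swap:
  assumes c: "compat e z N" and st: "strict e N" and k: "Suc k < N" and ek: "e k \<le> z k"
    and h: "k+2 = N \<or> z (Suc k) < e (Suc k)" and e': "\<forall>i<N. e' i = e (tr k i)"
  shows "compat e' z N"
  unfolding compat_def
proof (intro allI impI conjI)
  fix i assume i: "i < N"
  have lt: "e (Suc k) < e k" using st k unfolding strict_def by auto
  show "i + 2 < N \<Longrightarrow> z (i + 1) < e' i"
  proof -
    assume i2: "i+2 < N"
    consider "i = k" | "i = Suc k" | "i \<noteq> k \<and> i \<noteq> Suc k" by blast
    then show ?thesis
    proof cases
      case 1 then show ?thesis using e' i h i2 by (auto simp: tr_def)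
    next
      case 2
      have "z (k+2) < e (Suc k)" using c i2 2 unfolding compat_def by auto
      then show ?thesis using e' i 2 lt by (auto simp: tr_def)
    next
      case 3 then show ?thesis using e' i c i2 unfolding compat_def by (auto simp: tr_def)
    qed
  qed
  show "1 \<le> i \<Longrightarrow> e' i \<le> z (i - 1)"
  proof -
    assume i1: "1 \<le> i"
    consider "i = k" | "i = Suc k" | "i \<noteq> k \<and> i \<noteq> Suc k" by blast
    then show ?thesis
    proof cases
      case 1
      have "e k \<le> z (k - 1)" using c i1 1 k unfolding compat_def by auto
      then show ?thesis using e' i 1 lt by (auto simp: tr_def)
    next
      case 2 then show ?thesis using e' i ek by (auto simp: tr_def)
    next
      case 3 then show ?thesis using e' i c i1 unfolding compat_def by (auto simp: tr_def)
    qed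
  qed
qed

lemma mono_glob:
  fixes f :: "nat \<Rightarrow> nat"
  assumes "\<forall>i. Suc i < N \<longrightarrow> f (Suc i) \<le> f i" "i \<le> j" "j < N"
  shows "f j \<le> f i"
  using assms(2,3)
proof (induction j)
  case 0 then show ?case by simp
next
  case (Suc j)
  then show ?case using assms(1) by (cases "i = Suc j") (auto intro: order_trans)
qed

lemma strict_glob:
  fixes f :: "nat \<Rightarrow> nat"
  assumes "\<forall>i. Suc i < N \<longrightarrow> f (Suc i) < f i"
  shows "strict f N"
  unfolding strict_def
proof (intro allI impI)
  fix i j assume "i < j \<and> j < N"
  then show "f j < f i"
  proof (induction j)
    case 0 then show ?case by simp
  next
    case (Suc j)
    then show ?case using assms by (cases "i = j") (auto intro: less_trans)
  qed
qed

lemma adj_rows: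
  assumes "shp L N" "Suc i < N"
  shows "(il L i \<in> set (fst L) \<and> il L (Suc i) \<in> set (snd L)) \<or>
         (il L i \<in> set (snd L) \<and> il L (Suc i) \<in> set (fst L))"
  using assms set_fst[OF assms(1)] set_snd[OF assms(1)] by (cases "even i") auto

lemma regular_strict:
  assumes "shp L N" "regular L" "\<forall>i. Suc i < N \<longrightarrow> il L (Suc i) \<le> il L i"
  shows "strict (il L) N"
proof (rule strict_glob, intro allI impI)
  fix i assume i: "Suc i < N"
  have "il L (Suc i) \<noteq> il L i" using adj_rows[OF assms(1) i] assms(2)
    unfolding regular_def by (metis disjoint_iff)
  then show "il L (Suc i) < il L i" using assms(3) i by (simp add: order_less_le)
qed

lemma nonreg_adj:
  assumes "shp L N" "\<not> regular L" "\<forall>i. Suc i < N \<longrightarrow> il L (Suc i) \<le> il L i"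
  shows "\<exists>j. Suc j < N \<and> il L j = il L (Suc j)"
proof -
  obtain x where x: "x \<in> set (fst L)" "x \<in> set (snd L)" using assms(2) unfolding regular_def by auto
  obtain p where p: "p < N" "even p" "il L p = x" using x(1) set_fst[OF assms(1)] by auto
  obtain q where q: "q < N" "odd q" "il L q = x" using x(2) set_snd[OF assms(1)] by auto
  have pq: "p \<noteq> q" using p q by auto
  define s where "s = min p q"
  define t where "t = max p q"
  have st: "s < t" "t < N" "il L s = il L t" using pq p q by (auto simp: s_def t_def min_def max_def)
  have "il L t \<le> il L (Suc s)" using mono_glob[where i="Suc s" and j=t, OF assms(3)] st by auto
  moreover have "il L (Suc s) \<le> il L s" using assms(3) st(1,2) by auto
  ultimately have "il L s = il L (Suc s)" using st(3) by simp
  then show ?thesis using st by (intro exI[of _ s]) auto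
qed



lemma ent_Suc: "p < length xs \<Longrightarrow> ent xs (Suc p) = ereal (real (xs!p))"
  by (simp add: ent_def)
lemma ent_out: "length xs < i \<Longrightarrow> ent xs i = -\<infinity>"
  by (simp add: ent_def)
lemma ent0_Suc: "ent0 xs (Suc p) = ent xs (Suc p)" by (simp add: ent0_def)
lemma ent0_0: "ent0 xs 0 = \<infinity>" by (simp add: ent0_def)

lemma er_le: "ereal (real x) \<le> ereal (real y) \<longleftrightarrow> x \<le> y" by simp
lemma er_less: "ereal (real x) < ereal (real y) \<longleftrightarrow> x < y" by simp
lemma er_minf: "-\<infinity> < ereal (real x)" "\<not> ereal (real x) \<le> -\<infinity>" by simp_all
lemma er_inf: "ereal (real x) \<le> \<infinity>" "ereal (real x) < \<infinity>" by simp_all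

lemma allSuc: "(\<forall>i. 1 \<le> i \<and> i \<le> n \<longrightarrow> P i) \<longleftrightarrow> (\<forall>p<n. P (Suc p))"
proof
  assume "\<forall>i. 1 \<le> i \<and> i \<le> n \<longrightarrow> P i" then show "\<forall>p<n. P (Suc p)" by simp
next
  assume a: "\<forall>p<n. P (Suc p)"
  show "\<forall>i. 1 \<le> i \<and> i \<le> n \<longrightarrow> P i"
  proof (intro allI impI)
    fix i assume "1 \<le> i \<and> i \<le> n"
    then obtain p where "i = Suc p" "p < n" by (cases i) auto
    then show "P i" using a by simp
  qed
qed



lemma le1: "p < length xs \<Longrightarrow> ent ys (Suc p) \<le> ent xs (Suc p) \<longleftrightarrow> (p < length ys \<longrightarrow> ys!p \<le> xs!p)"
  by (cases "p < length ys") (simp_all only: ent_Suc ent_out not_less er_le er_minf er_inf, simp_all)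
lemma lt1: "p < length xs \<Longrightarrow> ent ys (Suc p) < ent xs (Suc p) \<longleftrightarrow> (p < length ys \<longrightarrow> ys!p < xs!p)"
  by (cases "p < length ys") (simp_all only: ent_Suc ent_out not_less er_less er_minf er_inf, simp_all)
lemma leS: "p < length xs \<Longrightarrow> ent ys (Suc (Suc p)) \<le> ent xs (Suc p) \<longleftrightarrow> (Suc p < length ys \<longrightarrow> ys!Suc p \<le> xs!p)"
  by (cases "Suc p < length ys") (simp_all only: ent_Suc ent_out not_less er_le er_minf er_inf, simp_all)
lemma ltS: "p < length xs \<Longrightarrow> ent ys (Suc (Suc p)) < ent xs (Suc p) \<longleftrightarrow> (Suc p < length ys \<longrightarrow> ys!Suc p < xs!p)"
  by (cases "Suc p < length ys") (simp_all only: ent_Suc ent_out not_less er_less er_minf er_inf, simp_all)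
lemma le0: "p < length xs \<Longrightarrow> ent xs (Suc p) \<le> ent0 ys p \<longleftrightarrow> (0<p \<longrightarrow> p-1 < length ys \<and> xs!p \<le> ys!(p-1))"
proof (cases p)
  case 0 then show ?thesis by (simp only: ent0_0 ent_Suc er_inf, simp)
next
  case (Suc q)
  assume p: "p < length xs"
  show ?thesis
  proof (cases "q < length ys")
    case True then show ?thesis using p Suc by (simp only: ent0_Suc ent_Suc er_le, simp)
  next
    case False then show ?thesis using p Suc by (simp only: ent0_Suc ent_Suc ent_out not_less er_minf, simp)
  qed
qed
lemma lt0: "p < length xs \<Longrightarrow> ent xs (Suc p) < ent0 ys p \<longleftrightarrow> (0<p \<longrightarrow> p-1 < length ys \<and> xs!p < ys!(p-1))"
proof (cases p)
  case 0 then show ?thesis by (simp add: ent_def ent0_def)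
next
  case (Suc q)
  assume p: "p < length xs"
  show ?thesis
  proof (cases "q < length ys")
    case True then show ?thesis using p Suc by (simp only: ent0_Suc ent_Suc er_less, simp)
  next
    case False then show ?thesis using p Suc by (simp only: ent0_Suc ent_Suc ent_out not_less er_minf, simp)
  qed
qed


definition rowsA :: "nat list \<Rightarrow> nat list \<Rightarrow> nat list \<Rightarrow> nat list \<Rightarrow> bool" where
  "rowsA a b c d \<longleftrightarrow> (\<forall>i. 1 \<le> i \<and> i \<le> length d \<longrightarrow> ent a i > ent d i \<and> ent d i \<ge> ent a (i+1)) \<and>
        (\<forall>i. 1 \<le> i \<and> i \<le> length c \<longrightarrow> ent0 b (i-1) > ent c i \<and> ent c i \<ge> ent b i)"
definition rowsB :: "nat list \<Rightarrow> nat list \<Rightarrow> nat list \<Rightarrow> nat list \<Rightarrow> bool" where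
  "rowsB a b c d \<longleftrightarrow> (\<forall>i. 1 \<le> i \<and> i \<le> length d \<longrightarrow> ent a i \<ge> ent d i \<and> ent d i > ent a (i+1)) \<and>
        (\<forall>i. 1 \<le> i \<and> i \<le> length c \<longrightarrow> ent0 b (i-1) \<ge> ent c i \<and> ent c i > ent b i)"

lemma all_split: "(\<forall>k<N. P k) \<longleftrightarrow> (\<forall>p. 2*p < N \<longrightarrow> P (2*p)) \<and> (\<forall>p. Suc (2*p) < N \<longrightarrow> P (Suc (2*p)))"
proof safe
  fix k assume a: "\<forall>p. 2*p < N \<longrightarrow> P (2*p)" "\<forall>p. Suc (2*p) < N \<longrightarrow> P (Suc (2*p))" and k: "k < N"
  show "P k"
  proof (cases "even k")
    case True then obtain p where "k = 2*p" by (auto elim: evenE)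
    then show ?thesis using a k by simp
  next
    case False then obtain p where "k = Suc (2*p)" by (auto elim: oddE)
    then show ?thesis using a k by simp
  qed
qed auto

lemma il_pred: "0 < p \<Longrightarrow> il L (2*p - Suc 0) = snd L ! (p - 1)"
  by (cases p) (auto simp: il_def)
lemma il_SS: "il L (Suc (Suc (2*p))) = fst L ! Suc p"
  using il_even[of L "Suc p"] by simp

lemma rowsB_nat:
  assumes "length a = m+1" "length b = m" "length c = m+1" "length d = m+1"
  shows "rowsB a b c d \<longleftrightarrow> (\<forall>p<m+1. d!p \<le> a!p \<and> (p<m \<longrightarrow> a!Suc p < d!p) \<and>
      (0<p \<longrightarrow> c!p \<le> b!(p-1)) \<and> (p<m \<longrightarrow> b!p < c!p))"
  unfolding rowsB_def allSuc using assms
  by (auto simp: le1 lt1 leS ltS le0 lt0)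

lemma compatB:
  assumes "length a = m+1" "length b = m" "length c = m+1" "length d = m+1"
  shows "compat (il (c,d)) (il (a,b)) (2*m+2) \<longleftrightarrow> (\<forall>p<m+1. d!p \<le> a!p \<and> (p<m \<longrightarrow> a!Suc p < d!p) \<and>
      (0<p \<longrightarrow> c!p \<le> b!(p-1)) \<and> (p<m \<longrightarrow> b!p < c!p))" (is "?L \<longleftrightarrow> ?R")
proof
  assume L: ?L
  show ?R
  proof (intro allI impI)
    fix p assume p: "p < m+1"
    have 1: "(2*p+2 < 2*m+2 \<longrightarrow> il (a,b) (2*p+1) < il (c,d) (2*p)) \<and> (1 \<le> 2*p \<longrightarrow> il (c,d) (2*p) \<le> il (a,b) (2*p-1))"
      using L[unfolded compat_def, rule_format, of "2*p"] p by fastforce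
    have 2: "(Suc (2*p)+2 < 2*m+2 \<longrightarrow> il (a,b) (Suc (2*p)+1) < il (c,d) (Suc (2*p))) \<and> (1 \<le> Suc (2*p) \<longrightarrow> il (c,d) (Suc (2*p)) \<le> il (a,b) (Suc (2*p)-1))"
      using L[unfolded compat_def, rule_format, of "Suc (2*p)"] p by fastforce
    show "d!p \<le> a!p \<and> (p<m \<longrightarrow> a!Suc p < d!p) \<and> (0<p \<longrightarrow> c!p \<le> b!(p-1)) \<and> (p<m \<longrightarrow> b!p < c!p)"
      using 1 2 by (auto simp: il_pred il_SS)
  qed
next
  assume R: ?R
  show ?L unfolding compat_def
  proof (subst all_split, intro conjI allI impI)
    fix p assume p: "2*p < 2*m+2"
    then have "p < m+1" by simp
    then show "2*p+2 < 2*m+2 \<Longrightarrow> il (a,b) (2*p+1) < il (c,d) (2*p)"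
      "1 \<le> 2*p \<Longrightarrow> il (c,d) (2*p) \<le> il (a,b) (2*p-1)"
      using R by (auto simp: il_pred)
  next
    fix p assume p: "Suc (2*p) < 2*m+2"
    then have "p < m+1" by simp
    then show "Suc (2*p)+2 < 2*m+2 \<Longrightarrow> il (a,b) (Suc (2*p)+1) < il (c,d) (Suc (2*p))"
      "1 \<le> Suc (2*p) \<Longrightarrow> il (c,d) (Suc (2*p)) \<le> il (a,b) (Suc (2*p)-1)"
      using R by (auto simp: il_SS)
  qed
qed


lemma rowsA_nat:
  assumes "length a = m+1" "length b = m" "length c = m" "length d = m"
  shows "rowsA a b c d \<longleftrightarrow> (\<forall>p<m. d!p < a!p \<and> a!Suc p \<le> d!p \<and>
      (0<p \<longrightarrow> c!p < b!(p-1)) \<and> b!p \<le> c!p)"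
  unfolding rowsA_def allSuc using assms
  by (auto simp: le1 lt1 leS ltS le0 lt0)

lemma compatA:
  assumes "length a = m+1" "length b = m" "length c = m" "length d = m"
  shows "compat (il (a,b)) (il (c,d)) (2*m+1) \<longleftrightarrow> (\<forall>p<m. d!p < a!p \<and> a!Suc p \<le> d!p \<and>
      (0<p \<longrightarrow> c!p < b!(p-1)) \<and> b!p \<le> c!p)" (is "?L \<longleftrightarrow> ?R")
proof
  assume L: ?L
  show ?R
  proof (intro allI impI conjI)
    fix p assume p: "p < m"
    have "2*p+2 < 2*m+1 \<longrightarrow> il (c,d) (2*p+1) < il (a,b) (2*p)"
      using L[unfolded compat_def, rule_format, of "2*p"] p by fastforce
    then show "d!p < a!p" using p by simp
    have "1 \<le> 2*Suc p \<longrightarrow> il (a,b) (2*Suc p) \<le> il (c,d) (2*Suc p-1)"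
      using L[unfolded compat_def, rule_format, of "2*Suc p"] p by fastforce
    then show "a!Suc p \<le> d!p" by (simp add: il_pred il_SS)
    have "1 \<le> Suc (2*p) \<longrightarrow> il (a,b) (Suc (2*p)) \<le> il (c,d) (Suc (2*p)-1)"
      using L[unfolded compat_def, rule_format, of "Suc (2*p)"] p by fastforce
    then show "b!p \<le> c!p" by simp
    show "c!p < b!(p-1)" if "0 < p"
    proof -
      from that obtain q where q: "p = Suc q" by (cases p) auto
      have "Suc (2*q)+2 < 2*m+1 \<longrightarrow> il (c,d) (Suc (2*q)+1) < il (a,b) (Suc (2*q))"
        using L[unfolded compat_def, rule_format, of "Suc (2*q)"] p q by fastforce
      then show "c!p < b!(p-1)" using p q by (simp add: il_SS)
    qed
  qed
next
  assume R: ?R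
  show ?L unfolding compat_def
  proof (subst all_split, intro conjI allI impI)
    fix p assume p: "2*p < 2*m+1"
    show "2*p+2 < 2*m+1 \<Longrightarrow> il (c,d) (2*p+1) < il (a,b) (2*p)"
      using R p by auto
    show "1 \<le> 2*p \<Longrightarrow> il (a,b) (2*p) \<le> il (c,d) (2*p-1)"
    proof -
      assume "1 \<le> 2*p"
      then obtain q where q: "p = Suc q" by (cases p) auto
      then have "q < m" using p by simp
      then have "a!Suc q \<le> d!q" using R by auto
      then show ?thesis using q by (simp add: il_pred il_SS)
    qed
  next
    fix p assume p: "Suc (2*p) < 2*m+1"
    then have pm: "p < m" by simp
    show "Suc (2*p)+2 < 2*m+1 \<Longrightarrow> il (c,d) (Suc (2*p)+1) < il (a,b) (Suc (2*p))"
    proof -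
      assume "Suc (2*p)+2 < 2*m+1"
      then have "Suc p < m" by simp
      then have "c!Suc p < b!p" using R by fastforce
      then show ?thesis by (simp add: il_SS)
    qed
    show "1 \<le> Suc (2*p) \<Longrightarrow> il (a,b) (Suc (2*p)) \<le> il (c,d) (Suc (2*p)-1)"
      using R pm by auto
  qed
qed



lemma spec1_shp: "special1 Z m \<Longrightarrow> shp Z (2*m+1)"
  by (simp add: special1_def shp_def)
lemma spec0_shp: "special0 Z m \<Longrightarrow> shp Z (2*m)"
  by (simp add: special0_def shp_def)

lemma spec1_adj: assumes "special1 Z m" shows "\<forall>i. Suc i < 2*m+1 \<longrightarrow> il Z (Suc i) \<le> il Z i"
proof (intro allI impI)
  fix i assume i: "Suc i < 2*m+1"
  have h: "\<forall>i<m. snd Z ! i \<le> fst Z ! i \<and> fst Z ! (i+1) \<le> snd Z ! i" using assms by (simp add: special1_def)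
  show "il Z (Suc i) \<le> il Z i"
  proof (cases "even i")
    case True then obtain p where p: "i = 2*p" by (auto elim: evenE)
    then have "p < m" using i by simp
    then show ?thesis using h p by simp
  next
    case False then obtain p where p: "i = Suc (2*p)" by (auto elim: oddE)
    then have "p < m" using i by simp
    then show ?thesis using h p by (simp add: il_SS)
  qed
qed

lemma spec0_adj: assumes "special0 Z m" shows "\<forall>i. Suc i < 2*m \<longrightarrow> il Z (Suc i) \<le> il Z i"
proof (intro allI impI)
  fix i assume i: "Suc i < 2*m"
  have h1: "\<forall>i<m. snd Z ! i \<le> fst Z ! i" and h2: "\<forall>i. i + 1 < m \<longrightarrow> fst Z ! (i+1) \<le> snd Z ! i"
    using assms by (simp_all add: special0_def)
  show "il Z (Suc i) \<le> il Z i"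
  proof (cases "even i")
    case True then obtain p where p: "i = 2*p" by (auto elim: evenE)
    then have "p < m" using i by simp
    then show ?thesis using h1 p by simp
  next
    case False then obtain p where p: "i = Suc (2*p)" by (auto elim: oddE)
    then have "p + 1 < m" using i by simp
    then show ?thesis using h2 p by (simp add: il_SS)
  qed
qed

lemma swap_facts:
  assumes shp: "shp L N" and reg: "regular L" and st: "strict (il L) N" and k: "Suc k < N"
  shows "mk (il L \<circ> tr k) N \<in> Sbar L" "shp (mk (il L \<circ> tr k) N) N"
    "\<forall>i<N. il (mk (il L \<circ> tr k) N) i = il L (tr k i)" "mk (il L \<circ> tr k) N \<noteq> L"
    "defect (mk (il L \<circ> tr k) N) = defect L"
proof -
  have sub: "{il L k, il L (Suc k)} \<subseteq> singles L"
  proof -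
    have "il L k \<in> set (fst L) \<union> set (snd L)" "il L (Suc k) \<in> set (fst L) \<union> set (snd L)"
      using set_fst[OF shp] set_snd[OF shp] k by auto
    moreover have "singles L = set (fst L) \<union> set (snd L)" using reg
      by (auto simp: singles_def regular_def)
    ultimately show ?thesis by auto
  qed
  show "mk (il L \<circ> tr k) N \<in> Sbar L"
    unfolding Sbar_def swap_lemma[OF shp st k] using sub by blast
  show sh: "shp (mk (il L \<circ> tr k) N) N" by (rule shp_mk)
  show "\<forall>i<N. il (mk (il L \<circ> tr k) N) i = il L (tr k i)" by (simp add: il_mk)
  show "mk (il L \<circ> tr k) N \<noteq> L"
  proof
    assume eq: "mk (il L \<circ> tr k) N = L"
    have "il (mk (il L \<circ> tr k) N) k = il L (Suc k)" using k by (simp add: il_mk tr_def)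
    moreover have "il L (Suc k) < il L k" using st k by (simp add: strict_def)
    ultimately show False using eq by simp
  qed
  show "defect (mk (il L \<circ> tr k) N) = defect L" using sh shp by (simp add: defect_def shp_def)
qed

lemma BplusB: "Bplus m (m+1) Z Z' L L' \<longleftrightarrow> L \<in> Sbar Z \<and> L' \<in> Sbar Z' \<and> defect L' = 1 - defect L \<and>
   rowsB (fst L) (snd L) (fst L') (snd L')"
  by (simp add: Bplus_def Let_def rowsB_def)
lemma BplusA: "Bplus m m Z Z' L L' \<longleftrightarrow> L \<in> Sbar Z \<and> L' \<in> Sbar Z' \<and> defect L' = 1 - defect L \<and>
   rowsA (fst L) (snd L) (fst L') (snd L')"
  by (simp add: Bplus_def Let_def rowsA_def)


lemma part1:
  assumes s1: "special1 Z m" and s0: "special0 Z' (m+1)" and reg': "regular Z'"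
    and D: "D_Z m (m+1) Z Z' = {Z'}"
  shows "regular Z"
proof (rule ccontr)
  assume nreg: "\<not> regular Z"
  obtain a b where Zab: "Z = (a,b)" by (cases Z)
  obtain c d where Zcd: "Z' = (c,d)" by (cases Z')
  define N where "N = 2*m+2"
  have shZ: "shp Z (2*m+1)" using spec1_shp[OF s1] .
  have shZ': "shp Z' N" using spec0_shp[OF s0] by (simp add: N_def)
  have lens: "length a = m+1" "length b = m" "length c = m+1" "length d = m+1"
    using shZ shZ' Zab Zcd by (auto simp: shp_def N_def)
  have "(Z, Z') \<in> Drel m (m+1) Z Z'" using D by (auto simp: D_Z_def)
  then have B: "Bplus m (m+1) Z Z' Z Z'" and ZS: "Z \<in> Sdef Z 1" and Z'S: "Z' \<in> Sdef Z' 0"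
    by (auto simp: Drel_def)
  have rows: "rowsB a b c d" using BplusB[of m Z Z' Z Z'] B Zab Zcd by simp
  have cp: "compat (il Z') (il Z) N"
    using rows rowsB_nat[OF lens] compatB[OF lens] Zab Zcd by (simp add: N_def)
  have st: "strict (il Z') N" using regular_strict[OF shZ' reg'] spec0_adj[OF s0] by (simp add: N_def)
  obtain j where j: "Suc j < 2*m+1" "il Z j = il Z (Suc j)"
    using nonreg_adj[OF shZ nreg spec1_adj[OF s1]] by blast
  have "il Z' (Suc j) \<le> il Z j"
    using cp[unfolded compat_def, rule_format, of "Suc j"] j by (simp add: N_def)
  then have ej: "il Z' (Suc j) \<le> il Z (Suc j)" using j by simp
  obtain k where k: "Suc k < N" "il Z' k \<le> il Z k" "k+2 = N \<or> il Z (Suc k) < il Z' (Suc k)"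
    using find_k[of "Suc j" N "il Z'" "il Z"] ej j by (auto simp: N_def)
  define L1 where "L1 = mk (il Z' \<circ> tr k) N"
  note sf = swap_facts[OF shZ' reg' st k(1), folded L1_def]
  have cp1: "compat (il L1) (il Z) N" using compat_swap[OF cp st k(1) k(2) k(3) sf(3)] .
  obtain c1 d1 where L1cd: "L1 = (c1,d1)" by (cases L1)
  have lens1: "length a = m+1" "length b = m" "length c1 = m+1" "length d1 = m+1"
    using sf(2) lens L1cd by (auto simp: shp_def N_def)
  have rows1: "rowsB a b c1 d1"
    using cp1 rowsB_nat[OF lens1] compatB[OF lens1] Zab L1cd by (simp add: N_def)
  have "Bplus m (m+1) Z Z' Z L1"
    using BplusB[of m Z Z' Z L1] BplusB[of m Z Z' Z Z'] B sf(1) sf(5) rows1 Zab L1cd by simp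
  moreover have "L1 \<in> Sdef Z' 0" using Z'S sf(1) sf(5) by (simp add: Sdef_def)
  ultimately have "L1 \<in> D_Z m (m+1) Z Z'" using ZS by (simp add: D_Z_def Drel_def)
  then show False using D sf(4) by simp
qed

lemma part2:
  assumes s1: "special1 Z m" and s0: "special0 Z' m" and reg: "regular Z"
    and D: "D_Z' m m Z Z' = {Z}"
  shows "regular Z'"
proof (rule ccontr)
  assume nreg: "\<not> regular Z'"
  obtain a b where Zab: "Z = (a,b)" by (cases Z)
  obtain c d where Zcd: "Z' = (c,d)" by (cases Z')
  define N where "N = 2*m+1"
  have shZ: "shp Z N" using spec1_shp[OF s1] by (simp add: N_def)
  have shZ': "shp Z' (2*m)" using spec0_shp[OF s0] .
  have lens: "length a = m+1" "length b = m" "length c = m" "length d = m"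
    using shZ shZ' Zab Zcd by (auto simp: shp_def N_def)
  have "(Z, Z') \<in> Drel m m Z Z'" using D by (auto simp: D_Z'_def)
  then have B: "Bplus m m Z Z' Z Z'" and ZS: "Z \<in> Sdef Z 1" and Z'S: "Z' \<in> Sdef Z' 0"
    by (auto simp: Drel_def)
  have rows: "rowsA a b c d" using BplusA[of m Z Z' Z Z'] B Zab Zcd by simp
  have cp: "compat (il Z) (il Z') N"
    using rows rowsA_nat[OF lens] compatA[OF lens] Zab Zcd by (simp add: N_def)
  have st: "strict (il Z) N" using regular_strict[OF shZ reg] spec1_adj[OF s1] by (simp add: N_def)
  obtain j where j: "Suc j < 2*m" "il Z' j = il Z' (Suc j)"
    using nonreg_adj[OF shZ' nreg spec0_adj[OF s0]] by blast
  have "il Z (Suc j) \<le> il Z' j"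
    using cp[unfolded compat_def, rule_format, of "Suc j"] j by (simp add: N_def)
  then have ej: "il Z (Suc j) \<le> il Z' (Suc j)" using j by simp
  obtain k where k: "Suc k < N" "il Z k \<le> il Z' k" "k+2 = N \<or> il Z' (Suc k) < il Z (Suc k)"
    using find_k[of "Suc j" N "il Z" "il Z'"] ej j by (auto simp: N_def)
  define L1 where "L1 = mk (il Z \<circ> tr k) N"
  note sf = swap_facts[OF shZ reg st k(1), folded L1_def]
  have cp1: "compat (il L1) (il Z') N" using compat_swap[OF cp st k(1) k(2) k(3) sf(3)] .
  obtain a1 b1 where L1ab: "L1 = (a1,b1)" by (cases L1)
  have lens1: "length a1 = m+1" "length b1 = m" "length c = m" "length d = m"
    using sf(2) lens L1ab by (auto simp: shp_def N_def)
  have rows1: "rowsA a1 b1 c d"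
    using cp1 rowsA_nat[OF lens1] compatA[OF lens1] Zcd L1ab by (simp add: N_def)
  have "Bplus m m Z Z' L1 Z'"
    using BplusA[of m Z Z' L1 Z'] BplusA[of m Z Z' Z Z'] B sf(1) sf(5) rows1 Zcd L1ab by simp
  moreover have "L1 \<in> Sdef Z 1" using ZS sf(1) sf(5) by (simp add: Sdef_def)
  ultimately have "L1 \<in> D_Z' m m Z Z'" using Z'S by (simp add: D_Z'_def Drel_def)
  then show False using D sf(4) by simp
qed

theorem lemma0804:
  fixes Z Z' :: symbol and m m' :: nat
  assumes "special1 Z m" and "special0 Z' m'" and "m' = m \<or> m' = m + 1"
  shows "(m' = m + 1 \<and> regular Z' \<and> D_Z m m' Z Z' = {Z'} \<longrightarrow> regular Z)
       \<and> (m' = m \<and> regular Z \<and> D_Z' m m' Z Z' = {Z} \<longrightarrow> regular Z')"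
  using part1[OF assms(1)] part2[OF assms(1)] assms(2) by blast

end
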